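(* Let $0\le \rho<\tfrac12$ and let $P_1\ge P_2$ with $P_1>0$, $P_2\ge 0$, $P_1+P_2=1$. Let $(N^e(t),N^d(t))_{t\ge t_0}$ be a Markov chain on $\mathbb{Z}^2$ with independent steps given by $(N^e,N^d)\to(N^e+1,N^d+1)$ with probability $(1-\rho)P_1$, $(N^e,N^d)\to(N^e+1,N^d-1)$ with probability $\rho P_1$, $(N^e,N^d)\to(N^e-1,N^d-1)$ with probability $(1-\rho)P_2$, and $(N^e,N^d)\to(N^e-1,N^d+1)$ with probability $\rho P_2$. Suppose the pair is stable at time $t_0$, i.e. $N^e(t_0)>0$ and $N^d(t_0)>0$. Let $Q$ be the probability that a recurrence occurs, i.e. that there exists $t>t_0$ with $N^e(t)=0$ or $N^d(t)=0$. Then $$Q\le \left(\frac{P_2}{P_1}\right)^{N^e(t_0)}+\left[\frac{\rho P_1+(1-\rho)P_2}{(1-\rho)P_1+\rho P_2}\right]^{N^d(t_0)}.$$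
   Context: This models error propagation for a rate-1 direct shaping code with parsing length $m=1$ used on SLC flash: i.i.d. input words $\mathbf{w}_1,\mathbf{w}_2$ occur with probabilities $P_1,P_2$; the encoder maps the word with currently larger count to output $1$ and the other to $0$; the output passes through a binary symmetric channel with crossover probability $\rho$; the decoder rebuilds the dictionary from the received bits. $N^e(t)=n_1^e(t)-n_2^e(t)$ is the difference of the counts of $\mathbf{w}_1$ and $\mathbf{w}_2$ among the first $t$ encoder inputs, and $N^d(t)=n_1^d(t)-n_2^d(t)$ the corresponding difference among decoder outputs; their joint evolution is modeled by the random walk in the claim. *)

theory Defs
  imports "HOL-Probability.Probability"
begin

definition walk_pos :: "int \<times> int \<Rightarrow> (int \<times> int) stream \<Rightarrow> nat \<Rightarrow> int \<times> int" where
  "walk_pos s0 \<omega> n = (fst s0 + (\<Sum>i<n. fst (\<omega> !! i)), snd s0 + (\<Sum>i<n. snd (\<omega> !! i)))"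

end

theory Submission
  imports Defs
begin

definition hitN :: "(int \<times> int \<Rightarrow> int) \<Rightarrow> int \<Rightarrow> nat \<Rightarrow> (int \<times> int) stream set" where
  "hitN f x N = {\<omega>. \<exists>n\<in>{1..N}. x + (\<Sum>i<n. f (\<omega> !! i)) = 0}"

lemma hitN_sets: "hitN f x N \<in> sets (stream_space (measure_pmf D))"
proof -
  have "hitN f x N = (\<Union>n\<in>{1..N}. {\<omega>\<in>space (stream_space (measure_pmf D)).
          real_of_int x + (\<Sum>i<n. real_of_int (f (\<omega>!!i))) = 0})"
  proof -
    have "\<And>n \<omega>. (x + (\<Sum>i<n. f (\<omega> !! i)) = 0) = (real_of_int x + (\<Sum>i<n. real_of_int (f (\<omega>!!i))) = 0)"
      by (metis of_int_0_eq_iff of_int_add of_int_sum)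
    then show ?thesis by (auto simp: hitN_def space_stream_space)
  qed
  also have "\<dots> \<in> sets (stream_space (measure_pmf D))"
    by (intro sets.finite_UN) (auto, measurable)
  finally show ?thesis .
qed

lemma bex_shift1: "(\<exists>n\<in>{1..Suc N}. P n) = (\<exists>k\<in>{0..N}. P (Suc k))"
proof
  assume "\<exists>n\<in>{1..Suc N}. P n"
  then obtain n where n: "n \<in> {1..Suc N}" "P n" by blast
  then have "Suc (n - 1) = n" by simp
  with n show "\<exists>k\<in>{0..N}. P (Suc k)" by (intro bexI[of _ "n - 1"]) auto
next
  assume "\<exists>k\<in>{0..N}. P (Suc k)"
  then obtain k where "k \<in> {0..N}" "P (Suc k)" by blast
  then show "\<exists>n\<in>{1..Suc N}. P n" by (intro bexI[of _ "Suc k"]) auto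
qed

lemma bex_split0: "(\<exists>k\<in>{0..N::nat}. P k) = (P 0 \<or> (\<exists>k\<in>{1..N}. P k))"
proof -
  have "{0..N} = insert 0 {1..N}" by auto
  then show ?thesis by (simp only: bex_simps(5)) auto
qed

lemma hitN_Stream: "(z ## \<omega> \<in> hitN f x (Suc N)) = (x + f z = 0 \<or> \<omega> \<in> hitN f (x + f z) N)"
proof -
  have sh: "\<And>k. (\<Sum>i<Suc k. f ((z ## \<omega>) !! i)) = f z + (\<Sum>i<k. f (\<omega> !! i))"
    by (subst sum.lessThan_Suc_shift) simp
  have "(z ## \<omega> \<in> hitN f x (Suc N)) = (\<exists>n\<in>{1..Suc N}. x + (\<Sum>i<n. f ((z ## \<omega>) !! i)) = 0)"
    unfolding hitN_def by (rule mem_Collect_eq)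
  also have "\<dots> = (\<exists>k\<in>{0..N}. x + (\<Sum>i<Suc k. f ((z ## \<omega>) !! i)) = 0)"
    by (rule bex_shift1)
  also have "\<dots> = (\<exists>k\<in>{0..N}. (x + f z) + (\<Sum>i<k. f (\<omega> !! i)) = 0)"
    unfolding sh by (simp only: add.assoc)
  also have "\<dots> = ((x + f z) + (\<Sum>i<0. f (\<omega> !! i)) = 0 \<or> (\<exists>k\<in>{1..N}. (x + f z) + (\<Sum>i<k. f (\<omega> !! i)) = 0))"
    by (rule bex_split0)
  also have "\<dots> = (x + f z = 0 \<or> \<omega> \<in> hitN f (x + f z) N)"
    unfolding hitN_def by simp
  finally show ?thesis .
qed

lemma hitN_bound:
  fixes D :: "(int \<times> int) pmf" and f :: "int \<times> int \<Rightarrow> int" and p q :: real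
  assumes pq: "0 < p" "0 \<le> q" "p + q = 1"
    and integ: "\<And>g. (\<integral>\<^sup>+z. g (f z) \<partial>measure_pmf D) = ennreal p * g 1 + ennreal q * g (-1)"
  shows "x \<ge> 1 \<Longrightarrow> emeasure (stream_space (measure_pmf D)) (hitN f x N) \<le> ennreal ((q/p) ^ nat x)"
proof (induction N arbitrary: x)
  case 0
  then show ?case by (simp add: hitN_def)
next
  case (Suc N)
  let ?S = "stream_space (measure_pmf D)"
  let ?r = "q / p"
  interpret S: prob_space ?S by (rule prob_space.prob_space_stream_space[OF prob_space_measure_pmf])
  define G where "G d = (if x + d = 0 then 1 else emeasure ?S (hitN f (x + d) N))" for d
  have "emeasure ?S (hitN f x (Suc N)) =
      (\<integral>\<^sup>+z. emeasure ?S {\<omega>\<in>space ?S. z ## \<omega> \<in> hitN f x (Suc N)} \<partial>measure_pmf D)"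
    by (rule prob_space.emeasure_stream_space[OF prob_space_measure_pmf hitN_sets])
  also have "\<dots> = (\<integral>\<^sup>+z. G (f z) \<partial>measure_pmf D)"
  proof (rule nn_integral_cong)
    fix z
    have "{\<omega>\<in>space ?S. z ## \<omega> \<in> hitN f x (Suc N)} =
        (if x + f z = 0 then space ?S else hitN f (x + f z) N)"
      by (auto simp: hitN_Stream space_stream_space)
    then show "emeasure ?S {\<omega>\<in>space ?S. z ## \<omega> \<in> hitN f x (Suc N)} = G (f z)"
      by (simp add: G_def S.emeasure_space_1)
  qed
  also have "\<dots> = ennreal p * G 1 + ennreal q * G (-1)" by (rule integ)
  also have "\<dots> \<le> ennreal p * ennreal (?r ^ nat (x+1)) + ennreal q * ennreal (?r ^ nat (x-1))"
  proof (intro add_mono mult_left_mono)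
    show "G 1 \<le> ennreal (?r ^ nat (x+1))"
      using Suc.IH[of "x+1"] Suc.prems by (simp add: G_def)
    show "G (-1) \<le> ennreal (?r ^ nat (x-1))"
    proof (cases "x = 1")
      case True then show ?thesis by (simp add: G_def)
    next
      case False then show ?thesis
        using Suc.IH[of "x-1"] Suc.prems by (simp add: G_def)
    qed
  qed auto
  also have "\<dots> = ennreal (p * ?r ^ nat (x+1) + q * ?r ^ nat (x-1))"
    using pq by (simp add: ennreal_mult ennreal_plus)
  also have "p * ?r ^ nat (x+1) + q * ?r ^ nat (x-1) = ?r ^ nat x"
  proof -
    define m where "m = nat (x - 1)"
    have m: "nat x = Suc m" using Suc.prems unfolding m_def by (simp add: Suc_nat_eq_nat_zadd1)
    have e1: "nat (x+1) = Suc (Suc m)" using m Suc.prems by linarith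
    have e2: "nat (x-1) = m" using m Suc.prems by linarith
    have "p * ?r ^ Suc (Suc m) + q * ?r ^ m = ?r ^ m * (p * ?r * ?r + q)"
      by (simp add: algebra_simps)
    also have "p * ?r * ?r + q = ?r"
    proof -
      have "p * ?r * ?r + q = (q * q + q * p) / p" using pq by (simp add: field_simps)
      also have "q * q + q * p = q * (q + p)" by (simp add: algebra_simps)
      also have "q + p = 1" using pq by simp
      finally show ?thesis by simp
    qed
    finally show ?thesis using e1 e2 m by (simp add: mult.commute)
  qed
  finally show ?case .
qed

lemma hit_union_bound:
  fixes D :: "(int \<times> int) pmf" and f :: "int \<times> int \<Rightarrow> int" and p q :: real
  assumes pq: "0 < p" "0 \<le> q" "p + q = 1"
    and integ: "\<And>g. (\<integral>\<^sup>+z. g (f z) \<partial>measure_pmf D) = ennreal p * g 1 + ennreal q * g (-1)"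
    and x: "x \<ge> 1"
  shows "emeasure (stream_space (measure_pmf D)) (\<Union>N. hitN f x N) \<le> ennreal ((q/p) ^ nat x)"
proof -
  have inc: "incseq (hitN f x)"
    by (rule incseq_SucI) (auto simp: hitN_def intro: le_SucI)
  have "emeasure (stream_space (measure_pmf D)) (\<Union>N. hitN f x N)
      = (SUP N. emeasure (stream_space (measure_pmf D)) (hitN f x N))"
    by (rule SUP_emeasure_incseq[symmetric]) (auto intro: hitN_sets inc)
  also have "\<dots> \<le> ennreal ((q/p) ^ nat x)"
    by (rule SUP_least) (rule hitN_bound[OF pq integ x])
  finally show ?thesis .
qed

theorem theorem2:
  fixes \<rho> P1 P2 :: real and D :: "(int \<times> int) pmf" and a b :: nat
  assumes "0 \<le> \<rho>" and "\<rho> < 1/2"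
    and "P1 \<ge> P2" and "P1 > 0" and "P2 \<ge> 0" and "P1 + P2 = 1"
    and "pmf D (1, 1) = (1 - \<rho>) * P1"
    and "pmf D (1, -1) = \<rho> * P1"
    and "pmf D (-1, -1) = (1 - \<rho>) * P2"
    and "pmf D (-1, 1) = \<rho> * P2"
    and "a > 0" and "b > 0"
  shows "measure (stream_space (measure_pmf D))
           {\<omega> \<in> space (stream_space (measure_pmf D)).
              \<exists>n>0. fst (walk_pos (int a, int b) \<omega> n) = 0 \<or> snd (walk_pos (int a, int b) \<omega> n) = 0}
         \<le> (P2 / P1) ^ a + ((\<rho> * P1 + (1 - \<rho>) * P2) / ((1 - \<rho>) * P1 + \<rho> * P2)) ^ b"
proof -
  let ?S = "stream_space (measure_pmf D)"
  interpret S: prob_space ?S by (rule prob_space.prob_space_stream_space[OF prob_space_measure_pmf])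
  define A where "A = {(1::int, 1::int), (1, -1), (-1, -1), (-1, 1)}"
  have finA: "finite A" by (simp add: A_def)
  have sumA: "sum (pmf D) A = 1"
    using assms by (simp add: A_def algebra_simps)
  have "measure (measure_pmf D) A = 1"
    using sumA finA by (simp add: measure_measure_pmf_finite)
  then have "AE z in measure_pmf D. z \<in> A"
    by (subst (asm) measure_pmf.prob_eq_1) auto
  then have supp: "set_pmf D \<subseteq> A" by (auto simp: AE_measure_pmf_iff)
  have integ_gen: "(\<integral>\<^sup>+z. g z \<partial>measure_pmf D) = (\<Sum>z\<in>A. g z * ennreal (pmf D z))" for g :: "int \<times> int \<Rightarrow> ennreal"
    by (rule nn_integral_measure_pmf_support) (use finA supp in auto)
  have r0: "0 \<le> \<rho> * P1" "0 \<le> (1-\<rho>) * P1" "0 \<le> \<rho> * P2" "0 \<le> (1-\<rho>) * P2"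
    using assms by auto
  have distinct: "(1::int,1::int) \<noteq> (1,-1)" "(1::int,1::int) \<noteq> (-1,-1)" "(1::int,1::int) \<noteq> (-1,1)"
     "(1::int,-1::int) \<noteq> (-1,-1)" "(1::int,-1::int) \<noteq> (-1,1)" "(-1::int,-1::int) \<noteq> (-1,1)"
    by auto
  have sum4: "(\<Sum>z\<in>A. g z) = g (1,1) + g (1,-1) + g (-1,-1) + g (-1,1)" for g :: "int \<times> int \<Rightarrow> ennreal"
    unfolding A_def using distinct by (simp add: algebra_simps)
  have integ1: "(\<integral>\<^sup>+z. g (fst z) \<partial>measure_pmf D) = ennreal P1 * g 1 + ennreal P2 * g (-1)" for g
  proof -
    have "(\<integral>\<^sup>+z. g (fst z) \<partial>measure_pmf D) =
      g 1 * ennreal ((1-\<rho>) * P1) + g 1 * ennreal (\<rho> * P1) + g (-1) * ennreal ((1-\<rho>) * P2) + g (-1) * ennreal (\<rho> * P2)"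
      using assms by (simp add: integ_gen sum4)
    also have "\<dots> = g 1 * (ennreal ((1-\<rho>) * P1) + ennreal (\<rho> * P1)) + g (-1) * (ennreal ((1-\<rho>) * P2) + ennreal (\<rho> * P2))"
      by (simp add: algebra_simps)
    also have "\<dots> = g 1 * ennreal P1 + g (-1) * ennreal P2"
      using r0 by (simp add: ennreal_plus[symmetric] algebra_simps del: ennreal_plus)
    finally show ?thesis by (simp add: mult.commute)
  qed
  define p where "p = (1 - \<rho>) * P1 + \<rho> * P2"
  define q where "q = \<rho> * P1 + (1 - \<rho>) * P2"
  have integ2: "(\<integral>\<^sup>+z. g (snd z) \<partial>measure_pmf D) = ennreal p * g 1 + ennreal q * g (-1)" for g
  proof -
    have "(\<integral>\<^sup>+z. g (snd z) \<partial>measure_pmf D) =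
      g 1 * ennreal ((1-\<rho>) * P1) + g (-1) * ennreal (\<rho> * P1) + g (-1) * ennreal ((1-\<rho>) * P2) + g 1 * ennreal (\<rho> * P2)"
      using assms by (simp add: integ_gen sum4)
    also have "\<dots> = g 1 * (ennreal ((1-\<rho>) * P1) + ennreal (\<rho> * P2)) + g (-1) * (ennreal (\<rho> * P1) + ennreal ((1-\<rho>) * P2))"
      by (simp add: algebra_simps)
    also have "\<dots> = g 1 * ennreal p + g (-1) * ennreal q"
      using r0 by (simp add: p_def q_def ennreal_plus[symmetric] algebra_simps del: ennreal_plus)
    finally show ?thesis by (simp add: mult.commute)
  qed
  have p0: "0 < p"
  proof -
    have "0 < (1 - \<rho>) * P1" using assms by (intro mult_pos_pos) auto
    then show ?thesis using r0 unfolding p_def by linarith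
  qed
  have q0: "0 \<le> q" using r0 by (simp add: q_def)
  have pq1: "p + q = 1" using assms by (simp add: p_def q_def algebra_simps)
  have P1P2: "P1 + P2 = 1" "P2 \<ge> 0" "0 < P1" using assms by auto
  have a1: "int a \<ge> 1" "int b \<ge> 1" using assms by auto
  define U1 where "U1 = (\<Union>N. hitN fst (int a) N)"
  define U2 where "U2 = (\<Union>N. hitN snd (int b) N)"
  have U1s: "U1 \<in> sets ?S" unfolding U1_def by (rule sets.countable_UN) (auto simp: hitN_sets)
  have U2s: "U2 \<in> sets ?S" unfolding U2_def by (rule sets.countable_UN) (auto simp: hitN_sets)
  have e1: "emeasure ?S U1 \<le> ennreal ((P2/P1) ^ a)"
    using hit_union_bound[OF P1P2(3) P1P2(2) P1P2(1) integ1 a1(1)] by (simp add: U1_def)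
  have e2: "emeasure ?S U2 \<le> ennreal ((q/p) ^ b)"
    using hit_union_bound[OF p0 q0 pq1 integ2 a1(2)] by (simp add: U2_def)
  have m1: "measure ?S U1 \<le> (P2/P1) ^ a"
    using e1 P1P2 by (simp add: S.emeasure_eq_measure ennreal_le_iff)
  have m2: "measure ?S U2 \<le> (q/p) ^ b"
    using e2 p0 q0 by (simp add: S.emeasure_eq_measure ennreal_le_iff)
  have sub: "{\<omega> \<in> space ?S. \<exists>n>0. fst (walk_pos (int a, int b) \<omega> n) = 0 \<or> snd (walk_pos (int a, int b) \<omega> n) = 0}
      \<subseteq> U1 \<union> U2"
  proof
    fix \<omega> assume "\<omega> \<in> {\<omega> \<in> space ?S. \<exists>n>0. fst (walk_pos (int a, int b) \<omega> n) = 0 \<or> snd (walk_pos (int a, int b) \<omega> n) = 0}"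
    then obtain n where n: "n > 0" "fst (walk_pos (int a, int b) \<omega> n) = 0 \<or> snd (walk_pos (int a, int b) \<omega> n) = 0"
      by auto
    then have "\<omega> \<in> hitN fst (int a) n \<or> \<omega> \<in> hitN snd (int b) n"
      by (auto simp: walk_pos_def hitN_def)
    then show "\<omega> \<in> U1 \<union> U2" by (auto simp: U1_def U2_def)
  qed
  have "measure ?S {\<omega> \<in> space ?S. \<exists>n>0. fst (walk_pos (int a, int b) \<omega> n) = 0 \<or> snd (walk_pos (int a, int b) \<omega> n) = 0}
      \<le> measure ?S (U1 \<union> U2)"
    using sub U1s U2s by (intro S.finite_measure_mono) auto
  also have "\<dots> \<le> measure ?S U1 + measure ?S U2"
    using U1s U2s by (rule measure_Un_le)
  also have "\<dots> \<le> (P2/P1) ^ a + (q/p) ^ b" using m1 m2 by simp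
  finally show ?thesis by (simp add: p_def q_def)
qed

end
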